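(* Consider the infinite-horizon adaptive learning forward guidance model below, for any integer $T\ge1$ and any $\bar i<0$. (i) If interest-rate expectations are credible, then $\partial x_0/\partial i_T=-\sigma\beta^T$ and $\partial\pi_0/\partial i_T=-\lambda\sigma\beta^T$; in particular there is no forward guidance puzzle. (ii) If interest-rate expectations are not credible, then $\partial x_0/\partial i_T=\partial\pi_0/\partial i_T=0$ for every $T$; in particular there is no forward guidance puzzle.
   Context: Parameters: $0<\beta<1$, $\xi\in(0,1)$, $\lambda:=(1-\xi\beta)(1-\xi)/\xi$, $\sigma>0$, $\psi>1$, gains $\gamma_{x,t},\gamma_{\pi,t},\gamma_{i,t}$. Model: $x_t=-\sigma i_t+\hat E_t\sum_{k\ge t}\beta^{k-t}\big((1-\beta)x_{k+1}+\sigma\pi_{k+1}-\sigma\beta i_{k+1}\big)$, $\pi_t=\lambda x_t+\hat E_t\sum_{k\ge t}(\xi\beta)^{k-t}\big(\xi\beta\lambda x_{k+1}+(1-\xi)\beta\pi_{k+1}\big)$, with $\hat E_t x_{k+1}=\hat E_t x_{t+1}=\gamma_{x,t}x_{t-1}+(1-\gamma_{x,t})\hat E_{t-1}x_t$ and $\hat E_t\pi_{k+1}=\hat E_t\pi_{t+1}=\gamma_{\pi,t}\pi_{t-1}+(1-\gamma_{\pi,t})\hat E_{t-1}\pi_t$ for all $k\ge t$; initial values $x_{-1},\pi_{-1},i_{-1},\hat E_{-1}x_0,\hat E_{-1}\pi_0,\hat E_{-1}i_0$ are given and do not depend on $\bar i$. Policy: $i_t=0$ for $t=0,\dots,T-1$,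 $i_T=\bar i<0$, $i_t=\psi\pi_t$ for $t>T$. Credible interest-rate expectations at $t=0$: $\hat E_0 i_{k+1}=0$ for $k=0,\dots,T-2$, $\hat E_0 i_{T}=\bar i$, and $\hat E_0 i_{k+1}=\gamma_{i,0}i_{-1}+(1-\gamma_{i,0})\hat E_{-1}i_0$ for $k\ge T$. Non-credible: $\hat E_0 i_{k+1}=\gamma_{i,0}i_{-1}+(1-\gamma_{i,0})\hat E_{-1}i_0$ for all $k\ge0$. $\partial/\partial i_T$ denotes the derivative with respect to $\bar i$. The forward guidance puzzle means $\lim_{T\to\infty}\partial\pi_0/\partial i_T=\lim_{T\to\infty}\partial x_0/\partial i_T=-\infty$. *)

theory Defs
  imports "HOL-Analysis.Analysis"
begin

text \<open>Adaptive-learning update: E_t y_{t+1} = g * y_{t-1} + (1 - g) * E_{t-1} y_t.\<close>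
definition learn :: "real \<Rightarrow> real \<Rightarrow> real \<Rightarrow> real" where
  "learn g prev oldE = g * prev + (1 - g) * oldE"

text \<open>Policy rate at t = 0: i_t = 0 for t < T, i_T = ib (the case t > T cannot occur at t = 0).\<close>
definition i0_policy :: "nat \<Rightarrow> real \<Rightarrow> real" where
  "i0_policy T ib = (if 0 < T then 0 else ib)"

text \<open>Credible interest-rate expectations at t = 0; the k-th entry is E_0 i_{k+1};
  c is the learned value gamma_{i,0} i_{-1} + (1 - gamma_{i,0}) E_{-1} i_0.\<close>
definition Ei_cred :: "nat \<Rightarrow> real \<Rightarrow> real \<Rightarrow> nat \<Rightarrow> real" where
  "Ei_cred T ib c k = (if k + 1 < T then 0 else if k + 1 = T then ib else c)"

definition Ei_noncred :: "real \<Rightarrow> nat \<Rightarrow> real" where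
  "Ei_noncred c k = c"

text \<open>Output gap equation at t = 0; Exs k, Epi k, Ei k stand for E_0 x_{k+1}, E_0 pi_{k+1}, E_0 i_{k+1}.\<close>
definition x0_model :: "real \<Rightarrow> real \<Rightarrow> real \<Rightarrow> (nat \<Rightarrow> real) \<Rightarrow> (nat \<Rightarrow> real) \<Rightarrow> (nat \<Rightarrow> real) \<Rightarrow> real" where
  "x0_model \<sigma> \<beta> i0 Exs Epi Ei =
     - \<sigma> * i0 + (\<Sum>k. \<beta> ^ k * ((1 - \<beta>) * Exs k + \<sigma> * Epi k - \<sigma> * \<beta> * Ei k))"

definition pi0_model :: "real \<Rightarrow> real \<Rightarrow> real \<Rightarrow> real \<Rightarrow> (nat \<Rightarrow> real) \<Rightarrow> (nat \<Rightarrow> real) \<Rightarrow> real" where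
  "pi0_model lam \<xi> \<beta> x0 Exs Epi =
     lam * x0 + (\<Sum>k. (\<xi> * \<beta>) ^ k * (\<xi> * \<beta> * lam * Exs k + (1 - \<xi>) * \<beta> * Epi k))"

definition fg_puzzle :: "(nat \<Rightarrow> real) \<Rightarrow> (nat \<Rightarrow> real) \<Rightarrow> bool" where
  "fg_puzzle dpi dx = (filterlim dpi at_bot sequentially \<and> filterlim dx at_bot sequentially)"

end

theory Submission
  imports Defs
begin

lemma xC_lin:
  fixes \<beta> \<sigma> A B c j :: real
  assumes b0: "0 < \<beta>" and b1: "\<beta> < 1" and T: "T \<ge> 1"
  shows "x0_model \<sigma> \<beta> (i0_policy T j) (\<lambda>k. A) (\<lambda>k. B) (Ei_cred T j c)
       = x0_model \<sigma> \<beta> 0 (\<lambda>k. A) (\<lambda>k. B) (Ei_cred T 0 c) + (- \<sigma> * \<beta> ^ T) * j"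
proof -
  define F where "F j k = \<beta> ^ k * ((1 - \<beta>) * A + \<sigma> * B - \<sigma> * \<beta> * Ei_cred T j c k)" for j k
  have eq: "F j = (\<lambda>k. F 0 k + (if k = T - 1 then - \<sigma> * \<beta> ^ T * j else 0))"
  proof
    fix k
    have "\<beta> ^ (T - 1) * \<beta> = \<beta> ^ T" using T
      by (metis Suc_diff_1 less_le_trans power_Suc2 zero_less_one)
    then show "F j k = F 0 k + (if k = T - 1 then - \<sigma> * \<beta> ^ T * j else 0)"
      unfolding F_def Ei_cred_def using T by (auto simp: algebra_simps)
  qed
  have ev: "eventually (\<lambda>k. F 0 k = \<beta> ^ k * ((1 - \<beta>) * A + \<sigma> * B - \<sigma> * \<beta> * c)) sequentially"
    unfolding eventually_sequentially F_def Ei_cred_def by (rule exI[of _ T]) auto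
  have "summable (\<lambda>k. \<beta> ^ k * ((1 - \<beta>) * A + \<sigma> * B - \<sigma> * \<beta> * c))"
    using b0 b1 by (intro summable_mult2 summable_geometric) auto
  hence s0: "summable (F 0)" using summable_cong[OF ev] by simp
  have "F j sums (suminf (F 0) + (- \<sigma> * \<beta> ^ T * j))"
    unfolding eq
    by (rule sums_add[OF summable_sums[OF s0]]) (use sums_single[of "T - 1" "\<lambda>_. - \<sigma> * \<beta> ^ T * j"] in simp)
  hence "suminf (F j) = suminf (F 0) + (- \<sigma> * \<beta> ^ T * j)" by (rule sums_unique[symmetric])
  moreover have "i0_policy T j = 0" using T by (simp add: i0_policy_def)
  ultimately show ?thesis unfolding x0_model_def F_def by simp
qed

lemma pi_lin: "pi0_model lam \<xi> \<beta> x0 Exs Epi = lam * x0 + pi0_model lam \<xi> \<beta> 0 Exs Epi"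
  unfolding pi0_model_def by simp

lemma not_bot:
  fixes f :: "nat \<Rightarrow> real"
  assumes "eventually (\<lambda>T. f T \<ge> - M) sequentially"
  shows "\<not> filterlim f at_bot sequentially"
proof
  assume "filterlim f at_bot sequentially"
  hence "eventually (\<lambda>T. f T \<le> - M - 1) sequentially" by (simp add: filterlim_at_bot)
  with assms have "eventually (\<lambda>T. False) sequentially"
    by (rule eventually_elim2) auto
  thus False by simp
qed

theorem proposition11:
  fixes \<beta> \<xi> \<sigma> \<psi> \<gamma>x \<gamma>\<pi> \<gamma>i xm1 \<pi>m1 im1 Exm1 E\<pi>m1 Eim1 ib :: real
  assumes "0 < \<beta>" "\<beta> < 1" "0 < \<xi>" "\<xi> < 1" "0 < \<sigma>" "1 < \<psi>" "ib < 0"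
  defines "lam \<equiv> (1 - \<xi> * \<beta>) * (1 - \<xi>) / \<xi>"
    and "xC \<equiv> (\<lambda>T j. x0_model \<sigma> \<beta> (i0_policy T j) (\<lambda>k::nat. learn \<gamma>x xm1 Exm1) (\<lambda>k::nat. learn \<gamma>\<pi> \<pi>m1 E\<pi>m1) (Ei_cred T j (learn \<gamma>i im1 Eim1)))"
    and "\<pi>C \<equiv> (\<lambda>T j. pi0_model ((1 - \<xi> * \<beta>) * (1 - \<xi>) / \<xi>) \<xi> \<beta> (x0_model \<sigma> \<beta> (i0_policy T j) (\<lambda>k::nat. learn \<gamma>x xm1 Exm1) (\<lambda>k::nat. learn \<gamma>\<pi> \<pi>m1 E\<pi>m1) (Ei_cred T j (learn \<gamma>i im1 Eim1))) (\<lambda>k::nat. learn \<gamma>x xm1 Exm1) (\<lambda>k::nat. learn \<gamma>\<pi> \<pi>m1 E\<pi>m1))"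
    and "xN \<equiv> (\<lambda>(T::nat) j. x0_model \<sigma> \<beta> (i0_policy T j) (\<lambda>k::nat. learn \<gamma>x xm1 Exm1) (\<lambda>k::nat. learn \<gamma>\<pi> \<pi>m1 E\<pi>m1) (Ei_noncred (learn \<gamma>i im1 Eim1)))"
    and "\<pi>N \<equiv> (\<lambda>T j. pi0_model ((1 - \<xi> * \<beta>) * (1 - \<xi>) / \<xi>) \<xi> \<beta> (x0_model \<sigma> \<beta> (i0_policy T j) (\<lambda>k::nat. learn \<gamma>x xm1 Exm1) (\<lambda>k::nat. learn \<gamma>\<pi> \<pi>m1 E\<pi>m1) (Ei_noncred (learn \<gamma>i im1 Eim1))) (\<lambda>k::nat. learn \<gamma>x xm1 Exm1) (\<lambda>k::nat. learn \<gamma>\<pi> \<pi>m1 E\<pi>m1))"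
  shows "((\<forall>T::nat. T \<ge> 1 \<longrightarrow>
             (xC T has_real_derivative (- \<sigma> * \<beta> ^ T)) (at ib) \<and>
             (\<pi>C T has_real_derivative (- lam * \<sigma> * \<beta> ^ T)) (at ib))
          \<and> \<not> fg_puzzle (\<lambda>T. deriv (\<pi>C T) ib) (\<lambda>T. deriv (xC T) ib))
       \<and> ((\<forall>T::nat. T \<ge> 1 \<longrightarrow>
             (xN T has_real_derivative 0) (at ib) \<and>
             (\<pi>N T has_real_derivative 0) (at ib))
          \<and> \<not> fg_puzzle (\<lambda>T. deriv (\<pi>N T) ib) (\<lambda>T. deriv (xN T) ib))"
proof -
  have C: "(xC T has_real_derivative (- \<sigma> * \<beta> ^ T)) (at ib) \<and>
           (\<pi>C T has_real_derivative (- lam * \<sigma> * \<beta> ^ T)) (at ib)" if T: "T \<ge> 1" for T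
  proof -
    have xe: "xC T = (\<lambda>j. xC T 0 + (- \<sigma> * \<beta> ^ T) * j)"
      unfolding xC_def using xC_lin[OF assms(1,2) T] by (simp add: xC_lin[OF assms(1,2) T])
    have pe: "\<pi>C T = (\<lambda>j. lam * xC T j + pi0_model lam \<xi> \<beta> 0 (\<lambda>k::nat. learn \<gamma>x xm1 Exm1) (\<lambda>k::nat. learn \<gamma>\<pi> \<pi>m1 E\<pi>m1))"
      unfolding \<pi>C_def xC_def lam_def by (rule ext, rule pi_lin)
    have dx: "(xC T has_real_derivative (- \<sigma> * \<beta> ^ T)) (at ib)"
      by (subst xe) (auto intro!: derivative_eq_intros)
    have "(\<pi>C T has_real_derivative lam * (- \<sigma> * \<beta> ^ T)) (at ib)"
      unfolding pe by (auto intro!: derivative_eq_intros dx)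
    thus ?thesis using dx by (simp add: mult.assoc)
  qed
  have N: "(xN T has_real_derivative 0) (at ib) \<and> (\<pi>N T has_real_derivative 0) (at ib)"
    if T: "T \<ge> 1" for T
  proof -
    have "i0_policy T j = 0" for j using T by (simp add: i0_policy_def)
    hence "xN T = (\<lambda>j. xN T 0)" "\<pi>N T = (\<lambda>j. \<pi>N T 0)" unfolding xN_def \<pi>N_def by auto
    thus ?thesis by (metis DERIV_const)
  qed
  have ev1: "eventually (\<lambda>T. T \<ge> (1::nat)) sequentially" by (rule eventually_ge_at_top)
  have "\<not> filterlim (\<lambda>T. deriv (xC T) ib) at_bot sequentially"
  proof (rule not_bot[where M = \<sigma>])
    show "eventually (\<lambda>T. deriv (xC T) ib \<ge> - \<sigma>) sequentially"
      using ev1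
    proof (rule eventually_mono)
      fix T :: nat assume "T \<ge> 1"
      hence "deriv (xC T) ib = - \<sigma> * \<beta> ^ T" using C DERIV_imp_deriv by blast
      moreover have "\<beta> ^ T \<le> 1" using assms(1,2) by (simp add: power_le_one)
      ultimately show "deriv (xC T) ib \<ge> - \<sigma>" using assms(5) by (simp add: mult_left_le)
    qed
  qed
  moreover have "\<not> filterlim (\<lambda>T. deriv (xN T) ib) at_bot sequentially"
  proof (rule not_bot[where M = 0])
    show "eventually (\<lambda>T. deriv (xN T) ib \<ge> - 0) sequentially"
      using ev1 by (rule eventually_mono) (use N DERIV_imp_deriv in fastforce)
  qed
  ultimately show ?thesis using C N unfolding fg_puzzle_def by blast
qed

end
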